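(* Let $\alpha\in(0,1)$ and $k\in\mathbb{Z}\setminus\{0\}$, and let $R_{G_{\alpha,k}}$ be the bounded integral operator on $L^2(\mathbb{R}^+)$ with kernel $G_{\alpha,k}$. Then $\mathrm{ran}\,R_{G_{\alpha,k}}\subset L^2(\mathbb{R}^+,\langle x\rangle^{4\alpha}\mathrm{d}x)$.
   Context: $\langle x\rangle=\sqrt{1+x^2}$. $\Phi_{\alpha,k}(x)=\sqrt{\frac{\pi(1+\alpha)}{2|k|}}x^{-\alpha/2}e^{-\frac{|k|}{1+\alpha}x^{1+\alpha}}$, $F_{\alpha,k}(x)=\sqrt{\frac{2(1+\alpha)}{\pi|k|}}x^{-\alpha/2}\sinh\big(\frac{|k|}{1+\alpha}x^{1+\alpha}\big)$ for $x>0$, and $G_{\alpha,k}(r,\rho)=\frac{1}{1+\alpha}\Phi_{\alpha,k}(r)F_{\alpha,k}(\rho)$ if $0<\rho<r$, $G_{\alpha,k}(r,\rho)=\frac{1}{1+\alpha}F_{\alpha,k}(r)\Phi_{\alpha,k}(\rho)$ if $0<r<\rho$. *)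

theory Defs
  imports "HOL-Analysis.Analysis"
begin

definition jbr :: "real \<Rightarrow> real" where
  "jbr x = sqrt (1 + x\<^sup>2)"

definition Phi :: "real \<Rightarrow> int \<Rightarrow> real \<Rightarrow> real" where
  "Phi \<alpha> k x = sqrt (pi * (1 + \<alpha>) / (2 * \<bar>real_of_int k\<bar>)) * x powr (-\<alpha>/2)
      * exp (- (\<bar>real_of_int k\<bar> / (1 + \<alpha>)) * x powr (1 + \<alpha>))"

definition Fk :: "real \<Rightarrow> int \<Rightarrow> real \<Rightarrow> real" where
  "Fk \<alpha> k x = sqrt (2 * (1 + \<alpha>) / (pi * \<bar>real_of_int k\<bar>)) * x powr (-\<alpha>/2)
      * sinh ((\<bar>real_of_int k\<bar> / (1 + \<alpha>)) * x powr (1 + \<alpha>))"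

text \<open>Green kernel; the diagonal r = \<rho> (a null set) is assigned the second branch.\<close>
definition Gk :: "real \<Rightarrow> int \<Rightarrow> real \<Rightarrow> real \<Rightarrow> real" where
  "Gk \<alpha> k r \<rho> = (if \<rho> < r then Phi \<alpha> k r * Fk \<alpha> k \<rho> / (1 + \<alpha>)
                    else Fk \<alpha> k r * Phi \<alpha> k \<rho> / (1 + \<alpha>))"

definition RG :: "real \<Rightarrow> int \<Rightarrow> (real \<Rightarrow> complex) \<Rightarrow> real \<Rightarrow> complex" where
  "RG \<alpha> k f r = (LINT \<rho>:{0<..}|lborel. complex_of_real (Gk \<alpha> k r \<rho>) * f \<rho>)"

end

theory Submission
  imports Defs
begin

lemma sinh_le1: "sinh (t::real) \<le> exp t / 2"
  unfolding sinh_def by (simp add: field_simps)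

lemma sinh_le2: assumes "0 \<le> (t::real)" shows "sinh t \<le> t * exp t"
proof -
  have "1 + (-2*t) \<le> exp (-2*t)" by (rule exp_ge_add_one_self)
  then have "1 - exp (-2*t) \<le> 2*t" by simp
  then have "exp t * (1 - exp (-2*t)) \<le> exp t * (2*t)" by (intro mult_left_mono) auto
  moreover have "exp t * exp (-2*t) = exp (-t)" by (simp add: exp_add[symmetric])
  ultimately have "exp t - exp (-t) \<le> 2 * t * exp t" by (simp add: algebra_simps)
  then show ?thesis unfolding sinh_def by simp
qed

lemma sinh_nonneg': "0 \<le> (t::real) \<Longrightarrow> 0 \<le> sinh t" by simp

lemma pow_diff:
  fixes n m \<alpha> :: real
  assumes "0 < \<alpha>" "0 < n" "n \<le> m"
  shows "n powr \<alpha> * (m - n) \<le> m powr (1+\<alpha>) - n powr (1+\<alpha>)"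
proof -
  have "n powr \<alpha> \<le> m powr \<alpha>" using assms by (intro powr_mono2) auto
  then have "m * n powr \<alpha> \<le> m * m powr \<alpha>" using assms by (intro mult_left_mono) auto
  moreover have "m powr (1+\<alpha>) = m * m powr \<alpha>" "n powr (1+\<alpha>) = n * n powr \<alpha>"
    using assms by (auto simp: powr_add)
  ultimately show ?thesis by (simp add: algebra_simps)
qed

lemma pow_half:
  fixes n m \<alpha> :: real
  assumes "0 < \<alpha>" "0 < n" "n \<le> m/2"
  shows "n powr (1+\<alpha>) \<le> m powr (1+\<alpha>) / 2"
proof -
  have "n powr (1+\<alpha>) \<le> (m/2) powr (1+\<alpha>)" using assms by (intro powr_mono2) auto
  also have "\<dots> = m powr (1+\<alpha>) / 2 powr (1+\<alpha>)" using assms by (simp add: powr_divide)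
  also have "\<dots> \<le> m powr (1+\<alpha>) / 2"
  proof -
    have "2 \<le> (2::real) powr (1+\<alpha>)" using assms powr_mono[of 1 "1+\<alpha>" "2::real"] by simp
    then show ?thesis using assms by (intro divide_left_mono) auto
  qed
  finally show ?thesis .
qed

lemma sq_le_exp: assumes "0 \<le> (x::real)" shows "x^2 \<le> 4 * exp x"
proof -
  have "1 + x/2 \<le> exp (x/2)" by (rule exp_ge_add_one_self)
  then have "x/2 \<le> exp (x/2)" by linarith
  then have "(x/2)^2 \<le> (exp (x/2))^2" using assms by (intro power_mono) auto
  also have "(exp (x/2))^2 = exp x" by (simp add: power2_eq_square exp_add[symmetric])
  finally show ?thesis by (simp add: power2_eq_square)
qed

lemma jbr_ge1: "1 \<le> jbr x" unfolding jbr_def by simp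

lemma W_le: assumes "0 < \<alpha>" "\<alpha> < 1" shows "jbr m powr (2*\<alpha>) \<le> 1 + m^2"
proof -
  have "jbr m powr (2*\<alpha>) \<le> jbr m powr 2" using assms jbr_ge1[of m] by (intro powr_mono) auto
  also have "\<dots> = 1 + m^2" unfolding jbr_def by (simp add: powr_half_sqrt[symmetric] powr_powr)
  finally show ?thesis .
qed

lemma W_ge1: assumes "0 < \<alpha>" shows "1 \<le> jbr m powr (2*\<alpha>)"
  using jbr_ge1[of m] assms by (simp add: ge_one_powr_ge_zero)

lemma W_le2: assumes "0 < \<alpha>" "\<alpha> < 1" "1 \<le> m" shows "jbr m powr (2*\<alpha>) \<le> 2 * m powr (2*\<alpha>)"
proof -
  have "jbr m powr (2*\<alpha>) = (1 + m^2) powr \<alpha>" unfolding jbr_def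
    by (simp add: powr_half_sqrt[symmetric] powr_powr)
  also have "\<dots> \<le> (2 * m^2) powr \<alpha>" using assms by (intro powr_mono2) auto
  also have "\<dots> = 2 powr \<alpha> * m powr (2*\<alpha>)"
  proof -
    have m0: "0 < m" using assms by simp
    have mm: "m^2 = m powr 2" using m0 by (simp add: powr_numeral)
    have "(m^2) powr \<alpha> = m powr (2*\<alpha>)" by (simp only: mm) (simp add: powr_powr)
    moreover have "(2 * m^2) powr \<alpha> = 2 powr \<alpha> * (m^2) powr \<alpha>" using m0 by (simp add: powr_mult)
    ultimately show ?thesis by simp
  qed
  also have "\<dots> \<le> 2 * m powr (2*\<alpha>)"
  proof -
    have "(2::real) powr \<alpha> \<le> 2 powr 1" using assms by (intro powr_mono) auto
    then show ?thesis by (intro mult_right_mono) auto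
  qed
  finally show ?thesis .
qed

lemma regA:
  fixes \<alpha> c m n :: real
  assumes a: "0 < \<alpha>" "\<alpha> < 1" and c: "0 < c" and n: "0 < n" "n \<le> m" and m2: "m \<le> 2"
  shows "jbr m powr (2*\<alpha>) * ((m*n) powr (-\<alpha>/2) * exp (-c * m powr (1+\<alpha>)) * sinh (c * n powr (1+\<alpha>))) \<le> 10*c"
proof -
  define A where "A = c * n powr (1+\<alpha>)"
  have A0: "0 \<le> A" using c by (simp add: A_def)
  have Am: "A \<le> c * m powr (1+\<alpha>)" unfolding A_def using c n a by (intro mult_left_mono powr_mono2) auto
  have e: "exp (-c * m powr (1+\<alpha>)) * exp A \<le> 1"
    using Am by (simp add: exp_add[symmetric])
  have P: "exp (-c * m powr (1+\<alpha>)) * sinh A \<le> A"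
  proof -
    have "exp (-c * m powr (1+\<alpha>)) * sinh A \<le> exp (-c * m powr (1+\<alpha>)) * (A * exp A)"
      using sinh_le2[OF A0] by (intro mult_left_mono) auto
    also have "\<dots> = A * (exp (-c * m powr (1+\<alpha>)) * exp A)" by simp
    also have "\<dots> \<le> A * 1" using e A0 by (intro mult_left_mono) auto
    finally show ?thesis by simp
  qed
  have Q: "(m*n) powr (-\<alpha>/2) * A \<le> c * m"
  proof -
    have "(m*n) powr (-\<alpha>/2) * A = c * (m powr (-\<alpha>/2) * (n powr (-\<alpha>/2) * n powr (1+\<alpha>)))"
      using n by (simp add: A_def powr_mult)
    also have "n powr (-\<alpha>/2) * n powr (1+\<alpha>) = n powr (1+\<alpha>/2)"
      using n by (simp add: powr_add[symmetric] add.commute)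
    also have "n powr (1+\<alpha>/2) \<le> m powr (1+\<alpha>/2)" using n a by (intro powr_mono2) auto
    then have "c * (m powr (-\<alpha>/2) * n powr (1+\<alpha>/2)) \<le> c * (m powr (-\<alpha>/2) * m powr (1+\<alpha>/2))"
      using c by (intro mult_left_mono) auto
    also have "m powr (-\<alpha>/2) * m powr (1+\<alpha>/2) = m" using n by (simp add: powr_add[symmetric])
    finally show ?thesis .
  qed
  have I0: "0 \<le> (m*n) powr (-\<alpha>/2) * exp (-c * m powr (1+\<alpha>)) * sinh A"
    using A0 by simp
  have I: "(m*n) powr (-\<alpha>/2) * exp (-c * m powr (1+\<alpha>)) * sinh A \<le> 2 * c"
  proof -
    have "(m*n) powr (-\<alpha>/2) * exp (-c * m powr (1+\<alpha>)) * sinh A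
        = (m*n) powr (-\<alpha>/2) * (exp (-c * m powr (1+\<alpha>)) * sinh A)" by simp
    also have "\<dots> \<le> (m*n) powr (-\<alpha>/2) * A" using P by (intro mult_left_mono) auto
    also have "\<dots> \<le> c * m" by (rule Q)
    also have "\<dots> \<le> 2 * c" using c m2 by simp
    finally show ?thesis .
  qed
  have W: "jbr m powr (2*\<alpha>) \<le> 5"
  proof -
    have "m^2 \<le> 2^2" using n m2 by (intro power_mono) auto
    then show ?thesis using W_le[OF a, of m] by simp
  qed
  have "jbr m powr (2*\<alpha>) * ((m*n) powr (-\<alpha>/2) * exp (-c * m powr (1+\<alpha>)) * sinh A) \<le> 5 * (2*c)"
    by (rule mult_mono[OF W I _ I0]) simp
  then show ?thesis by (simp only: A_def)
qed

lemma regB: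
  fixes \<alpha> c m n x :: real
  assumes a: "0 < \<alpha>" "\<alpha> < 1" and c: "0 < c" and n: "0 < n" "n \<le> m" and m1: "1 \<le> m"
    and nm: "m/2 \<le> n" and x: "n \<le> x" "x \<le> m"
  shows "jbr m powr (2*\<alpha>) * ((m*n) powr (-\<alpha>/2) * exp (-c * m powr (1+\<alpha>)) * sinh (c * n powr (1+\<alpha>)))
     \<le> 8 * (x powr \<alpha> * exp (-(c/2) * x powr \<alpha> * (m - n)))"
proof -
  have x0: "0 < x" using n x by simp
  have xn: "x/2 \<le> n" using nm x by simp
  have E: "exp (-c * m powr (1+\<alpha>)) * sinh (c * n powr (1+\<alpha>)) \<le> exp (-(c/2) * x powr \<alpha> * (m - n)) / 2"
  proof -
    have "exp (-c * m powr (1+\<alpha>)) * sinh (c * n powr (1+\<alpha>)) \<le> exp (-c * m powr (1+\<alpha>)) * (exp (c * n powr (1+\<alpha>)) / 2)"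
      using sinh_le1 by (intro mult_left_mono) auto
    also have "\<dots> = exp (-c * (m powr (1+\<alpha>) - n powr (1+\<alpha>))) / 2"
      by (simp add: exp_add[symmetric] algebra_simps)
    also have "\<dots> \<le> exp (-(c/2) * x powr \<alpha> * (m - n)) / 2"
    proof -
      have "x powr \<alpha> / 2 \<le> n powr \<alpha>"
      proof -
        have "(x/2) powr \<alpha> \<le> n powr \<alpha>" using xn x0 a by (intro powr_mono2) auto
        moreover have "(x/2) powr \<alpha> = x powr \<alpha> / 2 powr \<alpha>" using x0 by (simp add: powr_divide)
        moreover have p2: "(2::real) powr \<alpha> \<le> 2" using a powr_mono[of \<alpha> 1 2] by simp
        moreover have "x powr \<alpha> / 2 \<le> x powr \<alpha> / 2 powr \<alpha>" using a p2
          by (intro divide_left_mono) auto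
        ultimately show ?thesis by linarith
      qed
      then have "x powr \<alpha> / 2 * (m - n) \<le> n powr \<alpha> * (m - n)" using n by (intro mult_right_mono) auto
      also have "\<dots> \<le> m powr (1+\<alpha>) - n powr (1+\<alpha>)" using pow_diff[OF a(1) n] .
      finally have "c * (x powr \<alpha> / 2 * (m - n)) \<le> c * (m powr (1+\<alpha>) - n powr (1+\<alpha>))"
        using c by (intro mult_left_mono) auto
      then show ?thesis by (simp add: algebra_simps)
    qed
    finally show ?thesis .
  qed
  have Pw: "(m*n) powr (-\<alpha>/2) \<le> 2 * x powr (-\<alpha>)"
  proof -
    have nn: "n*n \<le> m*n" using n by (intro mult_right_mono) auto
    have "(m*n) powr (-\<alpha>/2) \<le> (n*n) powr (-\<alpha>/2)" using n a nn by (intro powr_mono2') auto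
    also have "(n*n) powr (-\<alpha>/2) = n powr (-\<alpha>)" using n by (simp add: powr_mult powr_add[symmetric])
    also have "\<dots> \<le> (x/2) powr (-\<alpha>)" by (rule powr_mono2') (use a xn x0 in auto)
    also have "\<dots> = 2 powr \<alpha> * x powr (-\<alpha>)"
    proof -
      have "(x/2) powr (-\<alpha>) = x powr (-\<alpha>) / 2 powr (-\<alpha>)" using x0 by (simp add: powr_divide)
      also have "(2::real) powr (-\<alpha>) = 1 / 2 powr \<alpha>" by (simp add: powr_minus_divide)
      finally show ?thesis by simp
    qed
    also have "\<dots> \<le> 2 * x powr (-\<alpha>)"
    proof -
      have "(2::real) powr \<alpha> \<le> 2 powr 1" using a by (intro powr_mono) auto
      then show ?thesis by (intro mult_right_mono) auto
    qed
    finally show ?thesis .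
  qed
  have Wb: "jbr m powr (2*\<alpha>) \<le> 8 * x powr (2*\<alpha>)"
  proof -
    have w1: "jbr m powr (2*\<alpha>) \<le> 2 * m powr (2*\<alpha>)" by (rule W_le2[OF a m1])
    have w2: "m powr (2*\<alpha>) \<le> (2*x) powr (2*\<alpha>)" using x a n nm by (intro powr_mono2) auto
    have w3: "(2*x) powr (2*\<alpha>) = 2 powr (2*\<alpha>) * x powr (2*\<alpha>)" using x0 by (simp add: powr_mult)
    have w4: "(2::real) powr (2*\<alpha>) \<le> 4" using a powr_mono[of "2*\<alpha>" 2 2] by simp
    have w5: "2 powr (2*\<alpha>) * x powr (2*\<alpha>) \<le> 4 * x powr (2*\<alpha>)"
      by (rule mult_right_mono[OF w4]) simp
    show ?thesis using w1 w2 w3 w5 by linarith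
  qed
  have "jbr m powr (2*\<alpha>) * ((m*n) powr (-\<alpha>/2) * exp (-c * m powr (1+\<alpha>)) * sinh (c * n powr (1+\<alpha>)))
      = jbr m powr (2*\<alpha>) * ((m*n) powr (-\<alpha>/2) * (exp (-c * m powr (1+\<alpha>)) * sinh (c * n powr (1+\<alpha>))))"
    by simp
  also have "\<dots> \<le> (8 * x powr (2*\<alpha>)) * ((2 * x powr (-\<alpha>)) * (exp (-(c/2) * x powr \<alpha> * (m - n)) / 2))"
    using n c by (intro mult_mono[OF Wb mult_mono[OF Pw E]]) auto
  also have "\<dots> = 8 * ((x powr (2*\<alpha>) * x powr (-\<alpha>)) * exp (-(c/2) * x powr \<alpha> * (m - n)))" by simp
  also have "x powr (2*\<alpha>) * x powr (-\<alpha>) = x powr \<alpha>" using x0 by (simp add: powr_add[symmetric])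
  finally show ?thesis .
qed

lemma regC:
  fixes \<alpha> c m n :: real
  assumes a: "0 < \<alpha>" "\<alpha> < 1" and c: "0 < c" and n: "0 < n" and m1: "1 \<le> m" and nm: "n \<le> m/2"
  shows "jbr m powr (2*\<alpha>) * ((m*n) powr (-\<alpha>/2) * exp (-c * m powr (1+\<alpha>)) * sinh (c * n powr (1+\<alpha>)))
     \<le> (128*(c+1)/c^2) * exp (-(c/4) * m)"
proof -
  define A where "A = c * n powr (1+\<alpha>)"
  have A0: "0 \<le> A" using c by (simp add: A_def)
  define s where "s = sinh A * exp (-A)"
  have s0: "0 \<le> s" using A0 by (simp add: s_def)
  have s1: "s \<le> 1/2"
  proof -
    have "sinh A * exp (-A) \<le> exp A / 2 * exp (-A)" by (rule mult_right_mono[OF sinh_le1]) simp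
    also have "\<dots> = 1/2" by (simp add: exp_minus_inverse)
    finally show ?thesis unfolding s_def .
  qed
  have s2: "s \<le> A"
  proof -
    have "sinh A * exp (-A) \<le> (A * exp A) * exp (-A)" by (rule mult_right_mono[OF sinh_le2[OF A0]]) simp
    also have "\<dots> = A" by (simp add: exp_minus_inverse mult.assoc)
    finally show ?thesis unfolding s_def .
  qed
  have ns: "n powr (-\<alpha>/2) * s \<le> c + 1"
  proof (cases "n \<le> 1")
    case True
    have "n powr (-\<alpha>/2) * s \<le> n powr (-\<alpha>/2) * A" using s2 by (intro mult_left_mono) auto
    also have "\<dots> = c * (n powr (-\<alpha>/2) * n powr (1+\<alpha>))" by (simp add: A_def)
    also have "n powr (-\<alpha>/2) * n powr (1+\<alpha>) = n powr (1+\<alpha>/2)" using n by (simp add: powr_add[symmetric] add.commute)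
    finally have *: "n powr (-\<alpha>/2) * s \<le> c * n powr (1+\<alpha>/2)" .
    have "n powr (1+\<alpha>/2) \<le> 1" using True n a by (intro powr_le1) auto
    then have "c * n powr (1+\<alpha>/2) \<le> c * 1" using c by (intro mult_left_mono) auto
    then show ?thesis using * by simp
  next
    case False
    have "n powr (-\<alpha>/2) \<le> 1 powr (-\<alpha>/2)" using False a by (intro powr_mono2') auto
    then have "n powr (-\<alpha>/2) \<le> 1" by simp
    then have "n powr (-\<alpha>/2) * s \<le> 1 * (1/2)" using s0 s1 by (intro mult_mono) auto
    then show ?thesis using c by simp
  qed
  have mpow: "m powr (-\<alpha>/2) \<le> 1"
  proof -
    have "m powr (-\<alpha>/2) \<le> 1 powr (-\<alpha>/2)" using m1 a by (intro powr_mono2') auto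
    then show ?thesis by simp
  qed
  have Ex: "exp (-c * m powr (1+\<alpha>)) * exp A \<le> exp (-(c/2) * m)"
  proof -
    have "A \<le> c * (m powr (1+\<alpha>) / 2)" unfolding A_def using pow_half[OF a(1) n nm] c by (intro mult_left_mono) auto
    moreover have "m \<le> m powr (1+\<alpha>)"
    proof -
      have "m powr 1 \<le> m powr (1+\<alpha>)" using m1 a by (intro powr_mono) auto
      then show ?thesis using m1 by simp
    qed
    then have "c * m \<le> c * m powr (1+\<alpha>)" using c by (intro mult_left_mono) auto
    ultimately have "A \<le> (c * m powr (1+\<alpha>))/2" "c * m \<le> c * m powr (1+\<alpha>)" by simp_all
    moreover have "-(c/2) * m = -(c*m)/2" "-c * m powr (1+\<alpha>) = -(c * m powr (1+\<alpha>))" by simp_all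
    ultimately have "-c * m powr (1+\<alpha>) + A \<le> -(c/2) * m" by linarith
    then show ?thesis by (simp add: exp_add[symmetric])
  qed
  have eq: "(m*n) powr (-\<alpha>/2) * exp (-c * m powr (1+\<alpha>)) * sinh A
     = m powr (-\<alpha>/2) * (n powr (-\<alpha>/2) * s) * (exp (-c * m powr (1+\<alpha>)) * exp A)"
  proof -
    have e1: "exp (-A) * exp A = 1" by (simp add: exp_add[symmetric])
    have "m powr (-\<alpha>/2) * (n powr (-\<alpha>/2) * s) * (exp (-c * m powr (1+\<alpha>)) * exp A)
       = (m powr (-\<alpha>/2) * n powr (-\<alpha>/2)) * exp (-c * m powr (1+\<alpha>)) * sinh A * (exp (-A) * exp A)"
      unfolding s_def by (simp only: ac_simps)
    also have "\<dots> = (m*n) powr (-\<alpha>/2) * exp (-c * m powr (1+\<alpha>)) * sinh A"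
      unfolding e1 using n m1 by (simp add: powr_mult)
    finally show ?thesis by simp
  qed
  have I: "(m*n) powr (-\<alpha>/2) * exp (-c * m powr (1+\<alpha>)) * sinh A \<le> (c+1) * exp (-(c/2) * m)"
    unfolding eq
  proof -
    have "m powr (-\<alpha>/2) * (n powr (-\<alpha>/2) * s) \<le> 1 * (c+1)"
      using mpow ns s0 by (intro mult_mono) auto
    then show "m powr (-\<alpha>/2) * (n powr (-\<alpha>/2) * s) * (exp (-c * m powr (1+\<alpha>)) * exp A) \<le> (c+1) * exp (-(c/2) * m)"
      using Ex s0 c by (intro mult_mono) auto
  qed
  have I0: "0 \<le> (m*n) powr (-\<alpha>/2) * exp (-c * m powr (1+\<alpha>)) * sinh A" using A0 by simp
  have W: "jbr m powr (2*\<alpha>) \<le> 2 * m^2"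
  proof -
    have "1 \<le> m^2" using m1 by (simp add: one_le_power)
    then show ?thesis using W_le[OF a, of m] by linarith
  qed
  have sq: "m^2 * exp (-(c/2) * m) \<le> (64/c^2) * exp (-(c/4) * m)"
  proof -
    have q1: "(c*m/4)^2 \<le> 4 * exp (c*m/4)" by (rule sq_le_exp) (use c m1 in simp)
    have q2: "m^2 = (16/c^2) * (c*m/4)^2" using c by (simp add: power_mult_distrib power_divide)
    have q3: "(16/c^2) * (c*m/4)^2 \<le> (16/c^2) * (4 * exp (c*m/4))"
      by (rule mult_left_mono[OF q1]) simp
    have "m^2 \<le> (64/c^2) * exp (c*m/4)" using q2 q3 by simp
    then have "m^2 * exp (-(c/2) * m) \<le> (64/c^2) * exp (c*m/4) * exp (-(c/2) * m)"
      by (intro mult_right_mono) auto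
    also have "(64/c^2) * exp (c*m/4) * exp (-(c/2) * m) = (64/c^2) * exp (-(c/4) * m)"
      by (simp add: mult.assoc exp_add[symmetric])
    finally show ?thesis .
  qed
  have "jbr m powr (2*\<alpha>) * ((m*n) powr (-\<alpha>/2) * exp (-c * m powr (1+\<alpha>)) * sinh A)
      \<le> (2 * m^2) * ((c+1) * exp (-(c/2) * m))" by (rule mult_mono[OF W I _ I0]) simp
  also have "\<dots> = 2*(c+1) * (m^2 * exp (-(c/2) * m))" by simp
  also have "\<dots> \<le> 2*(c+1) * ((64/c^2) * exp (-(c/4) * m))" using sq c by (intro mult_left_mono) auto
  also have "\<dots> = (128*(c+1)/c^2) * exp (-(c/4) * m)" by simp
  finally show ?thesis by (simp only: A_def)
qed

lemma exp_int:
  fixes \<mu> :: real assumes mu: "0 < \<mu>"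
  shows "(\<integral>\<^sup>+y. ennreal (exp (-\<mu>*y)) * indicator {0..} y \<partial>lborel) = ennreal (1/\<mu>)"
proof -
  have "(\<integral>\<^sup>+y. ennreal (exp (-\<mu>*y)) * indicator {0..} y \<partial>lborel) = (0::real) - (- exp (-\<mu>*0)/\<mu>)"
  proof (rule nn_integral_FTC_atLeast)
    show "(\<lambda>y. exp (-\<mu>*y)) \<in> borel_measurable borel" by measurable
    show "((\<lambda>y. - exp (-\<mu>*y)/\<mu>) has_real_derivative exp (-\<mu>*y)) (at y)" for y
      using mu by (auto intro!: derivative_eq_intros simp: field_simps)
    show "0 \<le> exp (-\<mu>*y)" for y by simp
    show "((\<lambda>y. - exp (-\<mu>*y)/\<mu>) \<longlongrightarrow> 0) at_top"
    proof -
      have "filterlim (\<lambda>y. (-\<mu>)*y) at_bot at_top"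
        by (rule filterlim_tendsto_neg_mult_at_bot[OF tendsto_const _ filterlim_ident]) (use mu in simp)
      then have "((\<lambda>y. exp ((-\<mu>)*y)) \<longlongrightarrow> 0) at_top"
        by (rule filterlim_compose[OF exp_at_bot])
      then have "((\<lambda>y. - exp ((-\<mu>)*y)/\<mu>) \<longlongrightarrow> - 0/\<mu>) at_top"
        by (intro tendsto_intros) (use mu in auto)
      then show ?thesis by simp
    qed
  qed
  then show ?thesis by simp
qed

lemma exp_abs_int:
  fixes lam :: real assumes l: "0 < lam"
  shows "(\<integral>\<^sup>+z. ennreal (exp (-lam*\<bar>z\<bar>)) \<partial>lborel) \<le> ennreal (2/lam)"
proof -
  define f where "f z = ennreal (exp (-lam*z)) * indicator {0..} z" for z :: real
  have fm: "f \<in> borel_measurable borel" unfolding f_def by measurable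
  have "(\<integral>\<^sup>+z. ennreal (exp (-lam*\<bar>z\<bar>)) \<partial>lborel) \<le> (\<integral>\<^sup>+z. f z + f (-z) \<partial>lborel)"
    by (intro nn_integral_mono) (auto simp: f_def indicator_def)
  also have "\<dots> = (\<integral>\<^sup>+z. f z \<partial>lborel) + (\<integral>\<^sup>+z. f (-z) \<partial>lborel)"
    using fm by (intro nn_integral_add) auto
  also have "(\<integral>\<^sup>+z. f (-z) \<partial>lborel) = (\<integral>\<^sup>+z. f z \<partial>lborel)"
  proof -
    have fm': "(\<lambda>z. f (-z)) \<in> borel_measurable borel" using fm by measurable
    show ?thesis using nn_integral_real_affine[OF fm', of "-1" 0] by simp
  qed
  also have "(\<integral>\<^sup>+z. f z \<partial>lborel) = ennreal (1/lam)" unfolding f_def by (rule exp_int[OF l])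
  also have "ennreal (1/lam) + ennreal (1/lam) = ennreal (2/lam)"
    using l by (simp add: ennreal_plus[symmetric] del: ennreal_plus)
  finally show ?thesis .
qed

lemma exp_shift_int:
  fixes lam sc x :: real assumes l: "0 < lam" and sc: "0 < sc"
  shows "(\<integral>\<^sup>+y. ennreal (sc * exp (-(lam * sc) * abs (x - y))) \<partial>lborel) \<le> ennreal (2/lam)"
proof -
  define f where "f y = ennreal (sc * exp (-(lam * sc) * abs (x - y)))" for y
  have fm: "f \<in> borel_measurable borel" unfolding f_def by measurable
  have "(\<integral>\<^sup>+y. f y \<partial>lborel) = ennreal \<bar>1/sc\<bar> * (\<integral>\<^sup>+y. f (x + (1/sc) * y) \<partial>lborel)"
    using nn_integral_real_affine[OF fm, of "1/sc" x] sc by simp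
  also have "(\<lambda>y. f (x + (1/sc) * y)) = (\<lambda>y. ennreal sc * ennreal (exp (-lam*\<bar>y\<bar>)))"
  proof
    fix y
    have "(lam * sc) * abs (x - (x + 1/sc*y)) = lam*\<bar>y\<bar>" using sc by (simp add: abs_mult field_simps)
    then show "f (x + (1/sc) * y) = ennreal sc * ennreal (exp (-lam*\<bar>y\<bar>))"
      unfolding f_def using sc by (simp add: ennreal_mult)
  qed
  also have "(\<integral>\<^sup>+y. ennreal sc * ennreal (exp (-lam*\<bar>y\<bar>)) \<partial>lborel) = ennreal sc * (\<integral>\<^sup>+y. ennreal (exp (-lam*\<bar>y\<bar>)) \<partial>lborel)"
    by (rule nn_integral_cmult) measurable
  also have "ennreal \<bar>1/sc\<bar> * (ennreal sc * (\<integral>\<^sup>+y. ennreal (exp (-lam*\<bar>y\<bar>)) \<partial>lborel))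
     = (\<integral>\<^sup>+y. ennreal (exp (-lam*\<bar>y\<bar>)) \<partial>lborel)"
  proof -
    have "ennreal \<bar>1/sc\<bar> * ennreal sc = 1" using sc by (simp add: ennreal_mult[symmetric])
    then show ?thesis by (simp add: mult.assoc[symmetric])
  qed
  also have "\<dots> \<le> ennreal (2/lam)" by (rule exp_abs_int[OF l])
  finally show ?thesis unfolding f_def .
qed

lemma Gk_eq:
  assumes a: "0 < \<alpha>" and k: "k \<noteq> 0" and rho: "0 < \<rho>" "\<rho> \<le> r"
  shows "Gk \<alpha> k r \<rho> = (r*\<rho>) powr (-\<alpha>/2) * exp (-(\<bar>real_of_int k\<bar>/(1+\<alpha>)) * r powr (1+\<alpha>))
     * sinh ((\<bar>real_of_int k\<bar>/(1+\<alpha>)) * \<rho> powr (1+\<alpha>)) / \<bar>real_of_int k\<bar>"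
proof -
  define K where "K = \<bar>real_of_int k\<bar>"
  have K: "K > 0" using k by (simp add: K_def)
  have s: "sqrt (pi * (1 + \<alpha>) / (2 * K)) * sqrt (2 * (1 + \<alpha>) / (pi * K)) = (1+\<alpha>)/K"
  proof -
    have "sqrt (pi * (1 + \<alpha>) / (2 * K)) * sqrt (2 * (1 + \<alpha>) / (pi * K))
        = sqrt (((1+\<alpha>)/K)^2)" unfolding real_sqrt_mult[symmetric]
      using K pi_gt_zero by (intro arg_cong[where f=sqrt]) (simp add: field_simps power2_eq_square)
    also have "\<dots> = (1+\<alpha>)/K" using K a by simp
    finally show ?thesis .
  qed
  have p: "r powr (-\<alpha>/2) * \<rho> powr (-\<alpha>/2) = (r*\<rho>) powr (-\<alpha>/2)"
    using rho by (simp add: powr_mult)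
  define P where "P = sqrt (pi * (1 + \<alpha>) / (2 * K))"
  define Q where "Q = sqrt (2 * (1 + \<alpha>) / (pi * K))"
  have pq: "P * Q = (1+\<alpha>)/K" using s by (simp add: P_def Q_def)
  have a1: "1 + \<alpha> \<noteq> 0" using a by simp
  have "Gk \<alpha> k r \<rho> = (P*Q) * (r powr (-\<alpha>/2) * \<rho> powr (-\<alpha>/2)) * exp (-(K/(1+\<alpha>)) * r powr (1+\<alpha>))
     * sinh ((K/(1+\<alpha>)) * \<rho> powr (1+\<alpha>)) / (1+\<alpha>)"
  proof (cases "\<rho> < r")
    case True
    then show ?thesis unfolding Gk_def Phi_def Fk_def K_def[symmetric] P_def[symmetric] Q_def[symmetric]
      by (simp add: ac_simps)
  next
    case False
    then have "\<rho> = r" using rho by simp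
    then show ?thesis unfolding Gk_def Phi_def Fk_def K_def[symmetric] P_def[symmetric] Q_def[symmetric]
      by (simp add: ac_simps)
  qed
  also have "\<dots> = (r*\<rho>) powr (-\<alpha>/2) * exp (-(K/(1+\<alpha>)) * r powr (1+\<alpha>))
     * sinh ((K/(1+\<alpha>)) * \<rho> powr (1+\<alpha>)) / K"
  proof -
    have e: "\<And>X. (1+\<alpha>)/K * X / (1+\<alpha>) = X / K" using a1 by simp
    show ?thesis unfolding pq p by (simp only: mult.assoc e)
  qed
  finally show ?thesis unfolding K_def .
qed

lemma Gk_sym: "Gk \<alpha> k r \<rho> = Gk \<alpha> k \<rho> r"
  unfolding Gk_def by (auto simp: mult.commute)

definition Wt :: "real \<Rightarrow> real \<Rightarrow> real" where
  "Wt \<alpha> x = jbr x powr (2*\<alpha>)"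

definition hk :: "real \<Rightarrow> int \<Rightarrow> real \<Rightarrow> real \<Rightarrow> real" where
  "hk \<alpha> k x y = max (Wt \<alpha> x) (Wt \<alpha> y) * \<bar>Gk \<alpha> k x y\<bar>"

lemma hk_sym: "hk \<alpha> k x y = hk \<alpha> k y x"
  unfolding hk_def using Gk_sym[of \<alpha> k x y] by (simp add: max.commute)

lemma Wt_mono: assumes "0 < \<alpha>" "0 \<le> x" "x \<le> y" shows "Wt \<alpha> x \<le> Wt \<alpha> y"
proof -
  have "jbr x \<le> jbr y" unfolding jbr_def using assms by (simp add: power_mono)
  then show ?thesis unfolding Wt_def using assms jbr_ge1[of x] by (intro powr_mono2) auto
qed

lemma hk_nonneg: assumes "0 < \<alpha>" shows "0 \<le> hk \<alpha> k x y"
  unfolding hk_def Wt_def using W_ge1[OF assms, of x] by (intro mult_nonneg_nonneg) auto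

lemma hk_ge: assumes "0 < \<alpha>" shows "\<bar>Gk \<alpha> k x y\<bar> \<le> hk \<alpha> k x y"
proof -
  have "1 * \<bar>Gk \<alpha> k x y\<bar> \<le> max (Wt \<alpha> x) (Wt \<alpha> y) * \<bar>Gk \<alpha> k x y\<bar>"
    using W_ge1[OF assms, of x] unfolding Wt_def by (intro mult_right_mono) auto
  then show ?thesis unfolding hk_def by simp
qed

lemma hk_ge_W: assumes "0 < \<alpha>" shows "Wt \<alpha> x * \<bar>Gk \<alpha> k x y\<bar> \<le> hk \<alpha> k x y"
  unfolding hk_def by (intro mult_right_mono) auto

lemma hk_bound:
  assumes a: "0 < \<alpha>" "\<alpha> < 1" and k: "k \<noteq> 0" and x: "0 < x" and y: "0 < y"
  defines "K \<equiv> \<bar>real_of_int k\<bar>"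
  defines "c \<equiv> \<bar>real_of_int k\<bar> / (1+\<alpha>)"
  shows "hk \<alpha> k x y \<le> (10*c/K) * indicator {..2} y + (8/K) * (x powr \<alpha> * exp (-(c/2) * x powr \<alpha> * \<bar>x - y\<bar>))
     + (128*(c+1)/c^2/K) * exp (-(c/4) * y)"
proof -
  have K: "0 < K" using k by (simp add: K_def)
  have c: "0 < c" using k a by (simp add: c_def)
  define m where "m = max x y"
  define n where "n = min x y"
  have n0: "0 < n" and nm: "n \<le> m" using x y by (auto simp: m_def n_def)
  have xy: "\<bar>x - y\<bar> = m - n" by (auto simp: m_def n_def)
  have ym: "y \<le> m" and nx: "n \<le> x" and xm: "x \<le> m" by (auto simp: m_def n_def)
  define T0 where "T0 = (m*n) powr (-\<alpha>/2) * exp (-c * m powr (1+\<alpha>)) * sinh (c * n powr (1+\<alpha>))"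
  have T00: "0 \<le> T0" unfolding T0_def using c n0 by simp
  have G: "Gk \<alpha> k x y = T0 / K"
  proof (cases "x \<le> y")
    case True
    have "Gk \<alpha> k x y = Gk \<alpha> k y x" by (rule Gk_sym)
    also have "\<dots> = T0 / K" using Gk_eq[OF a(1) k x True] True
      unfolding T0_def K_def c_def m_def n_def by simp
    finally show ?thesis .
  next
    case False
    then show ?thesis using Gk_eq[OF a(1) k y, of x] False
      unfolding T0_def K_def c_def m_def n_def by simp
  qed
  have Wm: "max (Wt \<alpha> x) (Wt \<alpha> y) = Wt \<alpha> m"
    using Wt_mono[OF a(1), of x y] Wt_mono[OF a(1), of y x] x y by (auto simp: m_def max_def)
  define T where "T = jbr m powr (2*\<alpha>) * T0"
  have hT: "hk \<alpha> k x y = T / K"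
  proof -
    have "hk \<alpha> k x y = Wt \<alpha> m * \<bar>T0 / K\<bar>" unfolding hk_def Wm G ..
    then show ?thesis using T00 K by (simp add: T_def Wt_def)
  qed
  define B1 where "B1 = (10*c/K) * indicator {..2} y"
  define B2 where "B2 = (8/K) * (x powr \<alpha> * exp (-(c/2) * x powr \<alpha> * \<bar>x - y\<bar>))"
  define B3 where "B3 = (128*(c+1)/c^2/K) * exp (-(c/4) * y)"
  have B1: "0 \<le> B1" unfolding B1_def using c K by simp
  have B2: "0 \<le> B2" unfolding B2_def using K by simp
  have B3: "0 \<le> B3" unfolding B3_def using c K by simp
  have "T / K \<le> B1 + B2 + B3"
  proof (cases "m \<le> 2")
    case True
    have "T \<le> 10 * c" unfolding T_def T0_def by (rule regA[OF a c n0 nm True])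
    moreover have "y \<le> 2" using ym True by simp
    ultimately have "T / K \<le> B1" unfolding B1_def using K by (simp add: divide_right_mono)
    then show ?thesis using B2 B3 by simp
  next
    case False
    then have m1: "1 \<le> m" by simp
    show ?thesis
    proof (cases "m/2 \<le> n")
      case True
      have "T \<le> 8 * (x powr \<alpha> * exp (-(c/2) * x powr \<alpha> * (m - n)))"
        unfolding T_def T0_def by (rule regB[OF a c n0 nm m1 True nx xm])
      then have "T / K \<le> B2" unfolding B2_def xy using K by (simp add: divide_right_mono)
      then show ?thesis using B1 B3 by simp
    next
      case False
      then have nm2: "n \<le> m/2" by simp
      have "T \<le> (128*(c+1)/c^2) * exp (-(c/4) * m)"
        unfolding T_def T0_def by (rule regC[OF a c n0 m1 nm2])
      also have "\<dots> \<le> (128*(c+1)/c^2) * exp (-(c/4) * y)"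
        using c ym by (intro mult_left_mono) auto
      finally have "T / K \<le> ((128*(c+1)/c^2) * exp (-(c/4) * y)) / K" using K by (intro divide_right_mono) auto
      also have "\<dots> = B3" unfolding B3_def by simp
      finally have "T / K \<le> B3" .
      then show ?thesis using B1 B2 by simp
    qed
  qed
  then show ?thesis unfolding hT B1_def B2_def B3_def .
qed

lemma hk_int:
  assumes a: "0 < \<alpha>" "\<alpha> < 1" and k: "k \<noteq> 0" and x: "0 < x"
  defines "K \<equiv> \<bar>real_of_int k\<bar>"
  defines "c \<equiv> \<bar>real_of_int k\<bar> / (1+\<alpha>)"
  shows "(\<integral>\<^sup>+y. ennreal (indicator {0<..} y * hk \<alpha> k x y) \<partial>lborel)
     \<le> ennreal (2*(10*c/K) + (8/K)*(4/c) + (128*(c+1)/c^2/K)*(4/c))"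
proof -
  have K: "0 < K" using k by (simp add: K_def)
  have c: "0 < c" using k a by (simp add: c_def)
  define C1 where "C1 = 10*c/K"
  define C2 where "C2 = 8/K"
  define C3 where "C3 = 128*(c+1)/c^2/K"
  have C1: "0 \<le> C1" and C2: "0 \<le> C2" and C3: "0 \<le> C3" using c K by (auto simp: C1_def C2_def C3_def)
  define sc where "sc = x powr \<alpha>"
  have sc: "0 < sc" using x by (simp add: sc_def)
  define lam where "lam = c/2"
  have lam: "0 < lam" using c by (simp add: lam_def)
  define f1 where "f1 y = ennreal C1 * indicator {0<..2} y" for y :: real
  define f2 where "f2 y = ennreal C2 * ennreal (sc * exp (-(lam * sc) * abs (x - y)))" for y
  define f3 where "f3 y = ennreal C3 * (ennreal (exp (-(c/4)*y)) * indicator {0..} y)" for y :: real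
  have f1m: "f1 \<in> borel_measurable lborel" unfolding f1_def by measurable
  have f2m: "f2 \<in> borel_measurable lborel" unfolding f2_def by measurable
  have f3m: "f3 \<in> borel_measurable lborel" unfolding f3_def by measurable
  have pw: "ennreal (indicator {0<..} y * hk \<alpha> k x y) \<le> f1 y + f2 y + f3 y" for y
  proof (cases "0 < y")
    case True
    have hb: "hk \<alpha> k x y \<le> C1 * indicator {..2} y + C2 * (sc * exp (-(lam * sc) * abs (x - y)))
       + C3 * exp (-(c/4) * y)"
      using hk_bound[OF a k x True] unfolding C1_def C2_def C3_def sc_def lam_def K_def c_def
      by (simp add: mult.assoc)
    have i1: "indicator {..2} y = (indicator {0<..2} y :: real)" using True by (simp add: indicator_def)
    have "ennreal (indicator {0<..} y * hk \<alpha> k x y) = ennreal (hk \<alpha> k x y)" using True by simp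
    also have "\<dots> \<le> ennreal (C1 * indicator {0<..2} y + C2 * (sc * exp (-(lam * sc) * abs (x - y)))
       + C3 * exp (-(c/4) * y))" using hb i1 by (intro ennreal_leI) simp
    also have "\<dots> = f1 y + f2 y + f3 y"
      unfolding f1_def f2_def f3_def using True C1 C2 C3 sc
      by (simp add: ennreal_plus[symmetric] ennreal_mult[symmetric] indicator_def del: ennreal_plus)
    finally show ?thesis .
  next
    case False
    then show ?thesis by simp
  qed
  have "(\<integral>\<^sup>+y. ennreal (indicator {0<..} y * hk \<alpha> k x y) \<partial>lborel) \<le> (\<integral>\<^sup>+y. f1 y + f2 y + f3 y \<partial>lborel)"
    by (intro nn_integral_mono pw)
  also have "\<dots> = (\<integral>\<^sup>+y. f1 y \<partial>lborel) + (\<integral>\<^sup>+y. f2 y \<partial>lborel) + (\<integral>\<^sup>+y. f3 y \<partial>lborel)"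
    using f1m f2m f3m by (simp add: nn_integral_add)
  also have "(\<integral>\<^sup>+y. f1 y \<partial>lborel) = ennreal C1 * 2"
    unfolding f1_def by (simp add: nn_integral_cmult)
  also have "(\<integral>\<^sup>+y. f2 y \<partial>lborel) \<le> ennreal C2 * ennreal (4/c)"
  proof -
    have "(\<integral>\<^sup>+y. f2 y \<partial>lborel) = ennreal C2 * (\<integral>\<^sup>+y. ennreal (sc * exp (-(lam * sc) * abs (x - y))) \<partial>lborel)"
      unfolding f2_def by (rule nn_integral_cmult) measurable
    also have "\<dots> \<le> ennreal C2 * ennreal (2/lam)"
      by (intro mult_left_mono exp_shift_int[OF lam sc]) auto
    finally show ?thesis by (simp add: lam_def)
  qed
  also have "(\<integral>\<^sup>+y. f3 y \<partial>lborel) = ennreal C3 * ennreal (4/c)"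
  proof -
    have "(\<integral>\<^sup>+y. f3 y \<partial>lborel) = ennreal C3 * (\<integral>\<^sup>+y. ennreal (exp (-(c/4)*y)) * indicator {0..} y \<partial>lborel)"
      unfolding f3_def by (rule nn_integral_cmult) measurable
    also have "(\<integral>\<^sup>+y. ennreal (exp (-(c/4)*y)) * indicator {0..} y \<partial>lborel) = ennreal (1/(c/4))"
      by (rule exp_int) (use c in simp)
    finally show ?thesis by simp
  qed
  also have "ennreal C1 * 2 + ennreal C2 * ennreal (4/c) + ennreal C3 * ennreal (4/c)
      = ennreal (2*C1 + C2*(4/c) + C3*(4/c))"
  proof -
    have p1: "0 \<le> 2*C1" "0 \<le> C2*(4/c)" "0 \<le> C3*(4/c)" using C1 C2 C3 c by auto
    have "ennreal (2*C1 + C2*(4/c) + C3*(4/c)) = ennreal (2*C1) + ennreal (C2*(4/c)) + ennreal (C3*(4/c))"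
      using p1 by (simp add: ennreal_plus)
    moreover have "ennreal (2*C1) = ennreal C1 * 2" using ennreal_mult[of C1 2] C1 by (simp add: mult.commute)
    moreover have "ennreal (C2*(4/c)) = ennreal C2 * ennreal (4/c)" using C2 c ennreal_mult[of C2 "4/c"] by simp
    moreover have "ennreal (C3*(4/c)) = ennreal C3 * ennreal (4/c)" using C3 c ennreal_mult[of C3 "4/c"] by simp
    ultimately show ?thesis by simp
  qed
  finally show ?thesis unfolding C1_def C2_def C3_def by (simp add: mult.commute)
qed

lemma sinh_meas[measurable]: "(sinh::real\<Rightarrow>real) \<in> borel_measurable borel"
  unfolding sinh_def by measurable

lemma Gk_meas[measurable (raw)]:
  assumes [measurable]: "f \<in> borel_measurable M" "g \<in> borel_measurable M"
  shows "(\<lambda>z. Gk \<alpha> k (f z) (g z)) \<in> borel_measurable M"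
  unfolding Gk_def Phi_def Fk_def by measurable

lemma jbr_meas[measurable (raw)]:
  assumes [measurable]: "f \<in> borel_measurable M"
  shows "(\<lambda>z. jbr (f z)) \<in> borel_measurable M"
  unfolding jbr_def by measurable

lemma hk_meas[measurable (raw)]:
  assumes [measurable]: "f \<in> borel_measurable M" "g \<in> borel_measurable M"
  shows "(\<lambda>z. hk \<alpha> k (f z) (g z)) \<in> borel_measurable M"
  unfolding hk_def Wt_def by measurable

lemma test: "(\<lambda>(x,y). hk \<alpha> k x y * Gk \<alpha> k y x) \<in> borel_measurable (lborel \<Otimes>\<^sub>M lborel)"
  by measurable

lemma amgm_sq:
  fixes X C h :: real
  assumes X: "0 \<le> X" and C: "0 < C" and h: "0 \<le> h" and b: "\<And>t. 0 < t \<Longrightarrow> X \<le> t*C/2 + h/(2*t)"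
  shows "X^2 \<le> C*h"
proof (cases "h > 0")
  case True
  define q where "q = sqrt (h*C)"
  have s0: "0 < q" using True C by (simp add: q_def)
  have ss: "q * q = h*C" using True C by (simp add: q_def)
  have "X \<le> (q/C)*C/2 + h/(2*(q/C))" using b[of "q/C"] s0 C by simp
  also have "(q/C)*C/2 = q/2" using C by simp
  also have "h/(2*(q/C)) = q/2"
  proof -
    have "h/(2*(q/C)) = (h*C)/(2* q)" using C s0 by (simp add: field_simps)
    also have "\<dots> = (q * q)/(2* q)" using ss by simp
    also have "\<dots> = q/2" using s0 by simp
    finally show ?thesis .
  qed
  finally have "X \<le> q" by simp
  then have "X^2 \<le> q^2" using X by (intro power_mono) auto
  also have "q^2 = C*h" using ss by (simp add: power2_eq_square mult.commute)
  finally show ?thesis .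
next
  case False
  then have h0: "h = 0" using h by simp
  have "X = 0"
  proof (rule ccontr)
    assume "X \<noteq> 0"
    then have Xp: "0 < X" using X by simp
    have "X \<le> (X/C)*C/2 + h/(2*(X/C))" using b[of "X/C"] Xp C by simp
    then have "X \<le> X/2" using C h0 by simp
    then show False using Xp by simp
  qed
  then show ?thesis using C h by simp
qed

lemma Wt_sq: "(Wt \<alpha> r)^2 = jbr r powr (4*\<alpha>)"
proof -
  have "(Wt \<alpha> r)^2 = jbr r powr (2*\<alpha>) * jbr r powr (2*\<alpha>)" unfolding Wt_def by (simp add: power2_eq_square)
  also have "\<dots> = jbr r powr (4*\<alpha>)" using jbr_ge1[of r] by (simp add: powr_add[symmetric])
  finally show ?thesis .
qed

lemma ind_scale_eq:
  fixes f :: "real \<Rightarrow> complex"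
  shows "indicator {0<..} \<rho> *\<^sub>R (complex_of_real g * f \<rho>) = complex_of_real g * (indicator {0<..} \<rho> *\<^sub>R f \<rho>)"
  by (simp add: indicator_def)

theorem corollary3p5:
  fixes \<alpha> :: real and k :: int and f :: "real \<Rightarrow> complex"
  assumes "0 < \<alpha>" "\<alpha> < 1" "k \<noteq> 0"
    and "set_borel_measurable lborel {0<..} f"
    and "set_integrable lborel {0<..} (\<lambda>x. (cmod (f x))\<^sup>2)"
  shows "(\<forall>r>0. set_integrable lborel {0<..} (\<lambda>\<rho>. complex_of_real (Gk \<alpha> k r \<rho>) * f \<rho>))
    \<and> set_integrable lborel {0<..} (\<lambda>r. (jbr r) powr (4 * \<alpha>) * (cmod (RG \<alpha> k f r))\<^sup>2)"
proof -
  have a: "0 < \<alpha>" "\<alpha> < 1" and k: "k \<noteq> 0" using assms by auto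
  define K where "K = \<bar>real_of_int k\<bar>"
  define c where "c = \<bar>real_of_int k\<bar> / (1+\<alpha>)"
  have K: "0 < K" using k by (simp add: K_def)
  have c: "0 < c" using k a by (simp add: c_def)
  define Cst where "Cst = 2*(10*c/K) + (8/K)*(4/c) + (128*(c+1)/c^2/K)*(4/c)"
  have Cst: "0 < Cst" unfolding Cst_def using K c by (intro add_pos_pos) auto
  have HI: "(\<integral>\<^sup>+y. ennreal (indicator {0<..} y * hk \<alpha> k x y) \<partial>lborel) \<le> ennreal Cst" if "0 < x" for x
    using hk_int[OF a k that] unfolding Cst_def K_def c_def .
  have HI2: "(\<integral>\<^sup>+x. ennreal (indicator {0<..} x * hk \<alpha> k x y) \<partial>lborel) \<le> ennreal Cst" if "0 < y" for y
    using HI[OF that] by (simp add: hk_sym[of \<alpha> k _ y])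
  define f0 where "f0 x = indicator {0<..} x *\<^sub>R f x" for x
  have f0m[measurable]: "f0 \<in> borel_measurable lborel"
    using assms(4) unfolding set_borel_measurable_def f0_def[abs_def] .
  have f0z: "f0 x = 0" if "\<not> 0 < x" for x using that by (simp add: f0_def)
  have f0p: "f0 x = f x" if "0 < x" for x using that by (simp add: f0_def)
  have Nf: "(\<integral>\<^sup>+x. ennreal ((cmod (f0 x))^2) \<partial>lborel) < \<infinity>"
  proof -
    have "integrable lborel (\<lambda>x. indicator {0<..} x *\<^sub>R (cmod (f x))\<^sup>2)"
      using assms(5) unfolding set_integrable_def .
    then have "(\<integral>\<^sup>+x. ennreal (norm (indicator {0<..} x *\<^sub>R (cmod (f x))\<^sup>2)) \<partial>lborel) < \<infinity>"
      unfolding integrable_iff_bounded by simp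
    moreover have "norm (indicator {0<..} x *\<^sub>R (cmod (f x))\<^sup>2) = (cmod (f0 x))^2" for x
      by (cases "0 < x") (auto simp: f0_def)
    ultimately show ?thesis by simp
  qed
  define M where "M r = 10*c/K + 8/K * r powr \<alpha> + 128*(c+1)/c^2/K" for r
  have hkM: "hk \<alpha> k r \<rho> \<le> M r" if r: "0 < r" and \<rho>: "0 < \<rho>" for r \<rho>
  proof -
    have hb: "hk \<alpha> k r \<rho> \<le> (10*c/K) * indicator {..2} \<rho> + (8/K) * (r powr \<alpha> * exp (-(c/2) * r powr \<alpha> * \<bar>r - \<rho>\<bar>))
     + (128*(c+1)/c^2/K) * exp (-(c/4) * \<rho>)"
      using hk_bound[OF a k r \<rho>] unfolding K_def c_def .
    have i: "(10*c/K) * indicator {..2} \<rho> \<le> 10*c/K" using c K by (simp add: indicator_def)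
    have e1: "exp (-(c/2) * r powr \<alpha> * \<bar>r - \<rho>\<bar>) \<le> 1" using c by simp
    have e2: "(8/K) * (r powr \<alpha> * exp (-(c/2) * r powr \<alpha> * \<bar>r - \<rho>\<bar>)) \<le> 8/K * r powr \<alpha>"
    proof -
      have "r powr \<alpha> * exp (-(c/2) * r powr \<alpha> * \<bar>r - \<rho>\<bar>) \<le> r powr \<alpha> * 1"
        using e1 by (intro mult_left_mono) auto
      then show ?thesis using K by (intro mult_left_mono) auto
    qed
    have e3: "(128*(c+1)/c^2/K) * exp (-(c/4) * \<rho>) \<le> 128*(c+1)/c^2/K"
    proof -
      have "exp (-(c/4) * \<rho>) \<le> 1" using c \<rho> by simp
      then show ?thesis using c K by (intro mult_left_le) auto
    qed
    show ?thesis using hb i e2 e3 unfolding M_def by linarith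
  qed
  have M0: "0 \<le> M r" for r using c K unfolding M_def by (intro add_nonneg_nonneg) auto
  define gi where "gi r \<rho> = complex_of_real (Gk \<alpha> k r \<rho>) * f0 \<rho>" for r \<rho>
  have gi_eq: "(\<lambda>\<rho>. indicator {0<..} \<rho> *\<^sub>R (complex_of_real (Gk \<alpha> k r \<rho>) * f \<rho>)) = gi r" for r
    unfolding gi_def f0_def by (rule ext) (rule ind_scale_eq)
  have gim[measurable]: "(\<lambda>(r, \<rho>). gi r \<rho>) \<in> borel_measurable (lborel \<Otimes>\<^sub>M lborel)"
    unfolding gi_def by measurable
  have norm_gi: "norm (gi r \<rho>) = \<bar>Gk \<alpha> k r \<rho>\<bar> * cmod (f0 \<rho>)" for r \<rho>
    unfolding gi_def by (simp add: norm_mult)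
  have gi_int: "integrable lborel (gi r)" if r: "0 < r" for r
  proof -
    have "(\<integral>\<^sup>+\<rho>. ennreal (norm (gi r \<rho>)) \<partial>lborel)
       \<le> (\<integral>\<^sup>+\<rho>. ennreal (indicator {0<..} \<rho> * hk \<alpha> k r \<rho>) + ennreal (M r) * ennreal ((cmod (f0 \<rho>))^2) \<partial>lborel)"
    proof (intro nn_integral_mono)
      fix \<rho> :: real
      show "ennreal (norm (gi r \<rho>)) \<le> ennreal (indicator {0<..} \<rho> * hk \<alpha> k r \<rho>) + ennreal (M r) * ennreal ((cmod (f0 \<rho>))^2)"
      proof (cases "0 < \<rho>")
        case False
        then show ?thesis by (simp add: norm_gi f0z)
      next
        case True
        have g1: "\<bar>Gk \<alpha> k r \<rho>\<bar> * cmod (f0 \<rho>) \<le> hk \<alpha> k r \<rho> * cmod (f0 \<rho>)"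
          using hk_ge[OF a(1)] by (intro mult_right_mono) auto
        have "hk \<alpha> k r \<rho> * cmod (f0 \<rho>) \<le> hk \<alpha> k r \<rho> + M r * (cmod (f0 \<rho>))^2"
        proof (cases "cmod (f0 \<rho>) \<le> 1")
          case True
          have "hk \<alpha> k r \<rho> * cmod (f0 \<rho>) \<le> hk \<alpha> k r \<rho> * 1"
            using True hk_nonneg[OF a(1)] by (intro mult_left_mono) auto
          moreover have "0 \<le> M r * (cmod (f0 \<rho>))^2" using M0 by simp
          ultimately show ?thesis by simp
        next
          case False
          have "cmod (f0 \<rho>) * 1 \<le> cmod (f0 \<rho>) * cmod (f0 \<rho>)" using False by (intro mult_left_mono) auto
          then have "cmod (f0 \<rho>) \<le> (cmod (f0 \<rho>))^2" by (simp add: power2_eq_square)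
          then have "hk \<alpha> k r \<rho> * cmod (f0 \<rho>) \<le> hk \<alpha> k r \<rho> * (cmod (f0 \<rho>))^2"
            using hk_nonneg[OF a(1)] by (intro mult_left_mono) auto
          also have "\<dots> \<le> M r * (cmod (f0 \<rho>))^2" using hkM[OF r True] by (intro mult_right_mono) auto
          finally show ?thesis using hk_nonneg[OF a(1), of k r \<rho>] by simp
        qed
        then have "norm (gi r \<rho>) \<le> indicator {0<..} \<rho> * hk \<alpha> k r \<rho> + M r * (cmod (f0 \<rho>))^2"
          using g1 True by (simp add: norm_gi)
        then have "ennreal (norm (gi r \<rho>)) \<le> ennreal (indicator {0<..} \<rho> * hk \<alpha> k r \<rho> + M r * (cmod (f0 \<rho>))^2)"
          by (rule ennreal_leI)
        also have "\<dots> = ennreal (indicator {0<..} \<rho> * hk \<alpha> k r \<rho>) + ennreal (M r) * ennreal ((cmod (f0 \<rho>))^2)"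
          using M0[of r] hk_nonneg[OF a(1), of k r \<rho>] True by (simp add: ennreal_plus ennreal_mult)
        finally show ?thesis .
      qed
    qed
    also have "\<dots> = (\<integral>\<^sup>+\<rho>. ennreal (indicator {0<..} \<rho> * hk \<alpha> k r \<rho>) \<partial>lborel)
        + ennreal (M r) * (\<integral>\<^sup>+\<rho>. ennreal ((cmod (f0 \<rho>))^2) \<partial>lborel)"
      by (simp add: nn_integral_add nn_integral_cmult)
    also have "\<dots> < \<infinity>" using HI[OF r] Nf by (simp add: ennreal_mult_less_top order.strict_trans1)
    finally have fin: "(\<integral>\<^sup>+\<rho>. ennreal (norm (gi r \<rho>)) \<partial>lborel) < \<infinity>" .
    show ?thesis by (rule integrableI_bounded) (use fin in auto)
  qed
  have P1: "\<forall>r>0. set_integrable lborel {0<..} (\<lambda>\<rho>. complex_of_real (Gk \<alpha> k r \<rho>) * f \<rho>)"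
    unfolding set_integrable_def gi_eq using gi_int by blast
  have RGeq: "RG \<alpha> k f r = integral\<^sup>L lborel (gi r)" for r
    unfolding RG_def set_lebesgue_integral_def gi_eq ..
  have RGm[measurable]: "(\<lambda>r. RG \<alpha> k f r) \<in> borel_measurable lborel"
    unfolding RGeq using gim by (rule lborel.borel_measurable_lebesgue_integral)
  have gi_m[measurable]: "(\<lambda>\<rho>. gi r \<rho>) \<in> borel_measurable lborel" for r
    unfolding gi_def by measurable
  define \<Phi> where "\<Phi> r \<rho> = ennreal (indicator {0<..} r * (indicator {0<..} \<rho> * hk \<alpha> k r \<rho> * (cmod (f0 \<rho>))^2))" for r \<rho>
  have \<Phi>m[measurable]: "(\<lambda>(r,\<rho>). \<Phi> r \<rho>) \<in> borel_measurable (lborel \<Otimes>\<^sub>M lborel)"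
    unfolding \<Phi>_def by measurable
  have \<Phi>m1[measurable]: "(\<lambda>\<rho>. \<Phi> r \<rho>) \<in> borel_measurable lborel" for r
    unfolding \<Phi>_def by measurable
  define Hr where "Hr r = (\<integral>\<^sup>+\<rho>. \<Phi> r \<rho> \<partial>lborel)" for r
  have PW: "ennreal (jbr r powr (4*\<alpha>) * (cmod (RG \<alpha> k f r))^2) \<le> ennreal Cst * Hr r" if r: "0 < r" for r
  proof -
    define X where "X = Wt \<alpha> r * cmod (RG \<alpha> k f r)"
    have W0: "0 \<le> Wt \<alpha> r" unfolding Wt_def by simp
    have X0: "0 \<le> X" unfolding X_def using W0 by simp
    have Xb: "ennreal X \<le> ennreal (t/2) * ennreal Cst + ennreal (1/(2*t)) * Hr r" if t: "0 < t" for t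
    proof -
      have pw: "ennreal (Wt \<alpha> r) * ennreal (norm (gi r \<rho>))
          \<le> ennreal (t/2) * ennreal (indicator {0<..} \<rho> * hk \<alpha> k r \<rho>) + ennreal (1/(2*t)) * \<Phi> r \<rho>" for \<rho>
      proof (cases "0 < \<rho>")
        case False
        then show ?thesis by (simp add: norm_gi f0z)
      next
        case True
        define u where "u = cmod (f0 \<rho>)"
        have u0: "0 \<le> u" unfolding u_def by simp
        define H where "H = hk \<alpha> k r \<rho>"
        have H0: "0 \<le> H" unfolding H_def by (rule hk_nonneg[OF a(1)])
        have "Wt \<alpha> r * norm (gi r \<rho>) = (Wt \<alpha> r * \<bar>Gk \<alpha> k r \<rho>\<bar>) * u" unfolding norm_gi u_def by simp
        also have "\<dots> \<le> H * u" unfolding H_def using hk_ge_W[OF a(1)] u0 by (intro mult_right_mono) auto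
        also have "\<dots> \<le> H * (t/2 + u^2/(2*t))"
        proof -
          have "0 \<le> (t - u)^2" by simp
          then have "2*t*u \<le> t^2 + u^2" by (simp add: power2_diff)
          then have "u \<le> t/2 + u^2/(2*t)" using t by (simp add: field_simps power2_eq_square)
          then show ?thesis using H0 by (intro mult_left_mono) auto
        qed
        also have "\<dots> = t/2 * H + 1/(2*t) * (H * u^2)" by (simp add: algebra_simps)
        finally have re: "Wt \<alpha> r * norm (gi r \<rho>) \<le> t/2 * H + 1/(2*t) * (H * u^2)" .
        have "ennreal (Wt \<alpha> r) * ennreal (norm (gi r \<rho>)) = ennreal (Wt \<alpha> r * norm (gi r \<rho>))"
          using W0 by (simp add: ennreal_mult)
        also have "\<dots> \<le> ennreal (t/2 * H + 1/(2*t) * (H * u^2))" using re by (rule ennreal_leI)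
        also have "\<dots> = ennreal (t/2 * H) + ennreal (1/(2*t) * (H * u^2))"
          by (rule ennreal_plus) (use t H0 u0 in auto)
        also have "ennreal (t/2 * H) = ennreal (t/2) * ennreal H"
          by (rule ennreal_mult) (use t H0 in auto)
        also have "ennreal (1/(2*t) * (H * u^2)) = ennreal (1/(2*t)) * ennreal (H * u^2)"
          by (rule ennreal_mult) (use t H0 u0 in auto)
        also have "ennreal H = ennreal (indicator {0<..} \<rho> * hk \<alpha> k r \<rho>)" using True by (simp add: H_def)
        also have "ennreal (H * u^2) = \<Phi> r \<rho>" using True r by (simp add: \<Phi>_def H_def u_def)
        finally show ?thesis .
      qed
      have "ennreal X = ennreal (Wt \<alpha> r) * ennreal (cmod (integral\<^sup>L lborel (gi r)))"
        unfolding X_def RGeq using W0 by (simp add: ennreal_mult)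
      also have "\<dots> \<le> ennreal (Wt \<alpha> r) * (\<integral>\<^sup>+\<rho>. ennreal (norm (gi r \<rho>)) \<partial>lborel)"
        using integral_norm_bound_ennreal[OF gi_int[OF r]] by (intro mult_left_mono) auto
      also have "\<dots> = (\<integral>\<^sup>+\<rho>. ennreal (Wt \<alpha> r) * ennreal (norm (gi r \<rho>)) \<partial>lborel)"
        by (rule nn_integral_cmult[symmetric]) measurable
      also have "\<dots> \<le> (\<integral>\<^sup>+\<rho>. ennreal (t/2) * ennreal (indicator {0<..} \<rho> * hk \<alpha> k r \<rho>) + ennreal (1/(2*t)) * \<Phi> r \<rho> \<partial>lborel)"
        by (intro nn_integral_mono pw)
      also have "\<dots> = ennreal (t/2) * (\<integral>\<^sup>+\<rho>. ennreal (indicator {0<..} \<rho> * hk \<alpha> k r \<rho>) \<partial>lborel) + ennreal (1/(2*t)) * Hr r"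
        unfolding Hr_def by (simp add: nn_integral_add nn_integral_cmult)
      also have "\<dots> \<le> ennreal (t/2) * ennreal Cst + ennreal (1/(2*t)) * Hr r"
        using HI[OF r] by (intro add_right_mono mult_left_mono) auto
      finally show ?thesis .
    qed
    have XX: "jbr r powr (4*\<alpha>) * (cmod (RG \<alpha> k f r))^2 = X^2"
      unfolding X_def by (simp add: power_mult_distrib Wt_sq)
    show ?thesis
    proof (cases "Hr r")
      case top
      have "ennreal Cst * Hr r = top" using top Cst by (simp add: ennreal_mult_top)
      then show ?thesis by simp
    next
      case (real h)
      have Xr: "X \<le> t*Cst/2 + h/(2*t)" if t: "0 < t" for t
      proof -
        have "ennreal X \<le> ennreal (t/2) * ennreal Cst + ennreal (1/(2*t)) * ennreal h"
          using Xb[OF t] real by simp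
        also have "\<dots> = ennreal (t*Cst/2 + h/(2*t))"
        proof -
          have "ennreal (t*Cst/2 + h/(2*t)) = ennreal (t/2 * Cst) + ennreal (1/(2*t) * h)"
            using t Cst real by (simp add: ennreal_plus)
          also have "ennreal (t/2 * Cst) = ennreal (t/2) * ennreal Cst"
            by (rule ennreal_mult) (use t Cst in auto)
          also have "ennreal (1/(2*t) * h) = ennreal (1/(2*t)) * ennreal h"
            by (rule ennreal_mult) (use t real in auto)
          finally show ?thesis by simp
        qed
        finally show ?thesis using t Cst real by (subst (asm) ennreal_le_iff) auto
      qed
      have "X^2 \<le> Cst * h" by (rule amgm_sq[OF X0 Cst]) (use real Xr in auto)
      then have "ennreal (X^2) \<le> ennreal (Cst * h)" by (rule ennreal_leI)
      also have "\<dots> = ennreal Cst * Hr r" using real Cst by (simp add: ennreal_mult)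
      finally show ?thesis unfolding XX .
    qed
  qed
  have fin: "(\<integral>\<^sup>+r. ennreal (norm (indicator {0<..} r *\<^sub>R (jbr r powr (4*\<alpha>) * (cmod (RG \<alpha> k f r))^2))) \<partial>lborel) < \<infinity>"
  proof -
    have "(\<integral>\<^sup>+r. ennreal (norm (indicator {0<..} r *\<^sub>R (jbr r powr (4*\<alpha>) * (cmod (RG \<alpha> k f r))^2))) \<partial>lborel)
        \<le> (\<integral>\<^sup>+r. ennreal Cst * Hr r \<partial>lborel)"
    proof (intro nn_integral_mono)
      fix r :: real
      show "ennreal (norm (indicator {0<..} r *\<^sub>R (jbr r powr (4*\<alpha>) * (cmod (RG \<alpha> k f r))^2))) \<le> ennreal Cst * Hr r"
      proof (cases "0 < r")
        case True
        then show ?thesis using PW[OF True] by simp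
      next
        case False
        then show ?thesis by simp
      qed
    qed
    also have "\<dots> = ennreal Cst * (\<integral>\<^sup>+r. Hr r \<partial>lborel)"
      unfolding Hr_def by (rule nn_integral_cmult) measurable
    also have "(\<integral>\<^sup>+r. Hr r \<partial>lborel) = (\<integral>\<^sup>+\<rho>. (\<integral>\<^sup>+r. \<Phi> r \<rho> \<partial>lborel) \<partial>lborel)"
      unfolding Hr_def by (rule lborel_pair.Fubini'[symmetric]) (rule \<Phi>m)
    also have "\<dots> \<le> (\<integral>\<^sup>+\<rho>. ennreal Cst * ennreal ((cmod (f0 \<rho>))^2) \<partial>lborel)"
    proof (intro nn_integral_mono)
      fix \<rho> :: real
      show "(\<integral>\<^sup>+r. \<Phi> r \<rho> \<partial>lborel) \<le> ennreal Cst * ennreal ((cmod (f0 \<rho>))^2)"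
      proof (cases "0 < \<rho>")
        case False
        then show ?thesis by (simp add: \<Phi>_def)
      next
        case True
        have "(\<integral>\<^sup>+r. \<Phi> r \<rho> \<partial>lborel) = (\<integral>\<^sup>+r. ennreal ((cmod (f0 \<rho>))^2) * ennreal (indicator {0<..} r * hk \<alpha> k r \<rho>) \<partial>lborel)"
        proof (intro nn_integral_cong)
          fix r
          show "\<Phi> r \<rho> = ennreal ((cmod (f0 \<rho>))^2) * ennreal (indicator {0<..} r * hk \<alpha> k r \<rho>)"
            unfolding \<Phi>_def using True hk_nonneg[OF a(1), of k r \<rho>]
            by (simp add: ennreal_mult[symmetric] mult_ac)
        qed
        also have "\<dots> = ennreal ((cmod (f0 \<rho>))^2) * (\<integral>\<^sup>+r. ennreal (indicator {0<..} r * hk \<alpha> k r \<rho>) \<partial>lborel)"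
          by (rule nn_integral_cmult) measurable
        also have "\<dots> \<le> ennreal ((cmod (f0 \<rho>))^2) * ennreal Cst"
          using HI2[OF True] by (intro mult_left_mono) auto
        finally show ?thesis by (simp add: mult.commute)
      qed
    qed
    also have "\<dots> = ennreal Cst * (\<integral>\<^sup>+\<rho>. ennreal ((cmod (f0 \<rho>))^2) \<partial>lborel)"
      by (rule nn_integral_cmult) measurable
    finally have "(\<integral>\<^sup>+r. ennreal (norm (indicator {0<..} r *\<^sub>R (jbr r powr (4*\<alpha>) * (cmod (RG \<alpha> k f r))^2))) \<partial>lborel)
        \<le> ennreal Cst * (ennreal Cst * (\<integral>\<^sup>+\<rho>. ennreal ((cmod (f0 \<rho>))^2) \<partial>lborel))"
      by (simp add: mult_left_mono)
    also have "\<dots> < \<infinity>" using Nf by (simp add: ennreal_mult_less_top)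
    finally show ?thesis .
  qed
  have P2: "set_integrable lborel {0<..} (\<lambda>r. (jbr r) powr (4 * \<alpha>) * (cmod (RG \<alpha> k f r))\<^sup>2)"
    unfolding set_integrable_def by (rule integrableI_bounded) (use fin in auto)
  show ?thesis using P1 P2 by blast
qed

end
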